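(* If a graph $G$ contains a strongly $1$-shallow $K_t$-minor, then $h_o(G)\geq t$.
   Context: A $K_t$-minor of a graph $G$ is given by $t$ pairwise vertex-disjoint connected subgraphs (bags) of $G$, any two of which are joined by an edge of $G$. A star is $K_{1,s}$ for some $s\ge1$. A $K_t$-minor is strongly $1$-shallow if each bag is either a single vertex or a star, and for every two bags there is a connecting edge of $G$ each of whose endpoints is either the unique vertex of a single-vertex bag or a leaf vertex of a star bag. A signed graph $(G,\sigma)$ is a graph with a map $\sigma:E(G)\to\{+,-\}$. Switching at a vertex $x$ changes the sign of every edge incident with $x$; this generates switching equivalence. $(H,\pi)$ is a minor of $(G,\sigma)$ if there exist a signature $\tau$ switching equivalent to $\sigma$ and pairwise vertex-disjoint subgraphs $B_x$ of $G$ ($x\in V(H)$) such that (i) the positive edges of each $B_x$ under $\tau$ form a connected spanning subgraph of $B_x$, and (ii) for each edge $xy$ of $H$ there is an edge $uv$ of $G$ with $u\in V(B_x)$, $v\in V(B_y)$ and $\tau(uv)=\pi(xy)$. $(G,-)$ denotes $G$ with all edges negative. The odd Hadwiger number $h_o(G)$ is the largest $t$ such that $(K_t,-)$ is a minor of $(G,-)$. *)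

theory Defs
  imports Main
begin

definition graph :: "'a set \<Rightarrow> 'a set set \<Rightarrow> bool" where
  "graph V E \<longleftrightarrow> finite V \<and>
     (\<forall>e\<in>E. \<exists>u v. e = {u, v} \<and> u \<noteq> v \<and> u \<in> V \<and> v \<in> V)"

definition subgraph :: "'a set \<Rightarrow> 'a set set \<Rightarrow> 'a set \<Rightarrow> 'a set set \<Rightarrow> bool" where
  "subgraph W F V E \<longleftrightarrow> W \<subseteq> V \<and> F \<subseteq> E \<and> (\<forall>e\<in>F. e \<subseteq> W)"

definition connected_graph :: "'a set \<Rightarrow> 'a set set \<Rightarrow> bool" where
  "connected_graph W F \<longleftrightarrow> W \<noteq> {} \<and>
     (\<forall>u\<in>W. \<forall>v\<in>W. (\<lambda>x y. {x, y} \<in> F)\<^sup>*\<^sup>* u v)"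

definition Kt_vertices :: "nat \<Rightarrow> nat set" where
  "Kt_vertices t = {0..<t}"

definition Kt_edges :: "nat \<Rightarrow> nat set set" where
  "Kt_edges t = {{i, j} | i j. i < t \<and> j < t \<and> i \<noteq> j}"

text \<open>Signatures: True = positive, False = negative.  Switching at vertex x.\<close>
definition switch_at :: "'a \<Rightarrow> ('a set \<Rightarrow> bool) \<Rightarrow> ('a set \<Rightarrow> bool)" where
  "switch_at x \<sigma> = (\<lambda>e. if x \<in> e then \<not> \<sigma> e else \<sigma> e)"

definition switching_equiv :: "'a set \<Rightarrow> ('a set \<Rightarrow> bool) \<Rightarrow> ('a set \<Rightarrow> bool) \<Rightarrow> bool" where
  "switching_equiv V \<sigma> \<tau> \<longleftrightarrow> (\<lambda>\<rho> \<rho>'. \<exists>x\<in>V. \<rho>' = switch_at x \<rho>)\<^sup>*\<^sup>* \<sigma> \<tau>"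

definition signed_minor ::
  "'b set \<Rightarrow> 'b set set \<Rightarrow> ('b set \<Rightarrow> bool) \<Rightarrow> 'a set \<Rightarrow> 'a set set \<Rightarrow> ('a set \<Rightarrow> bool) \<Rightarrow> bool" where
  "signed_minor VH EH \<pi> V E \<sigma> \<longleftrightarrow>
     (\<exists>\<tau> (BV :: 'b \<Rightarrow> 'a set) (BE :: 'b \<Rightarrow> 'a set set).
        switching_equiv V \<sigma> \<tau> \<and>
        (\<forall>x\<in>VH. subgraph (BV x) (BE x) V E) \<and>
        (\<forall>x\<in>VH. \<forall>y\<in>VH. x \<noteq> y \<longrightarrow> BV x \<inter> BV y = {}) \<and>
        (\<forall>x\<in>VH. connected_graph (BV x) {e \<in> BE x. \<tau> e}) \<and>
        (\<forall>x y. {x, y} \<in> EH \<longrightarrow>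
           (\<exists>u\<in>BV x. \<exists>v\<in>BV y. {u, v} \<in> E \<and> \<tau> {u, v} = \<pi> {x, y})))"

definition odd_hadwiger :: "'a set \<Rightarrow> 'a set set \<Rightarrow> nat" where
  "odd_hadwiger V E =
     Max {t. signed_minor (Kt_vertices t) (Kt_edges t) (\<lambda>_. False) V E (\<lambda>_. False)}"

text \<open>Bag i is given by a centre c i and a set of leaves L i:
  if L i = {} the bag is the single vertex c i, otherwise it is the star with centre c i
  and leaves L i (edges {c i, l}).  The admissible endpoints ("ports") of bag i are
  its unique vertex if single, else its leaves.\<close>
definition ports :: "'a \<Rightarrow> 'a set \<Rightarrow> 'a set" where
  "ports c L = (if L = {} then {c} else L)"

definition strongly_1_shallow_Kt_minor :: "'a set \<Rightarrow> 'a set set \<Rightarrow> nat \<Rightarrow> bool" where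
  "strongly_1_shallow_Kt_minor V E t \<longleftrightarrow>
     (\<exists>(c :: nat \<Rightarrow> 'a) (L :: nat \<Rightarrow> 'a set).
        (\<forall>i<t. c i \<in> V \<and> L i \<subseteq> V \<and> finite (L i) \<and> c i \<notin> L i \<and>
               (\<forall>l\<in>L i. {c i, l} \<in> E)) \<and>
        (\<forall>i<t. \<forall>j<t. i \<noteq> j \<longrightarrow> insert (c i) (L i) \<inter> insert (c j) (L j) = {}) \<and>
        (\<forall>i<t. \<forall>j<t. i \<noteq> j \<longrightarrow>
           (\<exists>u\<in>ports (c i) (L i). \<exists>v\<in>ports (c j) (L j). {u, v} \<in> E)))"

end

theory Submission
  imports Defs
begin

lemma foldr_switch:
  "foldr switch_at (map c xs) (\<lambda>_. False) e = odd (length (filter (\<lambda>i. c i \<in> e) xs))"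
  by (induction xs) (auto simp: switch_at_def)

lemma foldr_switch_equiv:
  assumes "set xs \<subseteq> V"
  shows "switching_equiv V \<sigma> (foldr switch_at xs \<sigma>)"
  using assms
proof (induction xs)
  case Nil
  then show ?case by (simp add: switching_equiv_def)
next
  case (Cons x xs)
  then have "switching_equiv V \<sigma> (foldr switch_at xs \<sigma>)" by simp
  then show ?case using Cons.prems unfolding switching_equiv_def
    by (auto intro: rtranclp.rtrancl_into_rtrancl)
qed

lemma bound:
  assumes "finite V" "signed_minor (Kt_vertices s) (Kt_edges s) \<pi> V E \<sigma>"
  shows "s \<le> card V"
proof -
  obtain \<tau> BV BE where
    sub: "\<forall>x\<in>Kt_vertices s. subgraph (BV x) (BE x) V E" and
    dis: "\<forall>x\<in>Kt_vertices s. \<forall>y\<in>Kt_vertices s. x \<noteq> y \<longrightarrow> BV x \<inter> BV y = {}" and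
    con: "\<forall>x\<in>Kt_vertices s. connected_graph (BV x) {e \<in> BE x. \<tau> e}"
    using assms(2) unfolding signed_minor_def by blast
  define f where "f i = (SOME v. v \<in> BV i)" for i
  have f: "f i \<in> BV i" if "i < s" for i
    using con that unfolding f_def connected_graph_def Kt_vertices_def
    by (metis atLeastLessThan_iff equals0I zero_le someI_ex)
  have "inj_on f {0..<s}"
    using f dis unfolding inj_on_def Kt_vertices_def by (metis IntI atLeastLessThan_iff empty_iff)
  moreover have "f ` {0..<s} \<subseteq> V"
    using f sub unfolding subgraph_def Kt_vertices_def by fastforce
  ultimately have "card {0..<s} \<le> card V"
    using card_inj_on_le assms(1) by blast
  then show ?thesis by simp
qed

theorem lemma2p1:
  fixes V :: "'a set" and E :: "'a set set" and t :: nat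
  assumes "graph V E"
    and "strongly_1_shallow_Kt_minor V E t"
  shows "odd_hadwiger V E \<ge> t"
proof -
  have finV: "finite V" using assms(1) unfolding graph_def by simp
  obtain c :: "nat \<Rightarrow> 'a" and L where
    h1: "\<forall>i<t. c i \<in> V \<and> L i \<subseteq> V \<and> finite (L i) \<and> c i \<notin> L i \<and> (\<forall>l\<in>L i. {c i, l} \<in> E)" and
    h2: "\<forall>i<t. \<forall>j<t. i \<noteq> j \<longrightarrow> insert (c i) (L i) \<inter> insert (c j) (L j) = {}" and
    h3: "\<forall>i<t. \<forall>j<t. i \<noteq> j \<longrightarrow>
           (\<exists>u\<in>ports (c i) (L i). \<exists>v\<in>ports (c j) (L j). {u, v} \<in> E)"
    using assms(2) unfolding strongly_1_shallow_Kt_minor_def by blast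
  define xs where "xs = filter (\<lambda>i. L i \<noteq> {}) [0..<t]"
  define \<tau> where "\<tau> = foldr switch_at (map c xs) (\<lambda>_. False)"
  have tau: "\<tau> e = odd (card {i. i < t \<and> L i \<noteq> {} \<and> c i \<in> e})" for e
  proof -
    have "\<tau> e = odd (length (filter (\<lambda>i. L i \<noteq> {} \<and> c i \<in> e) [0..<t]))"
      unfolding \<tau>_def foldr_switch xs_def by (simp add: filter_filter)
    also have "length (filter (\<lambda>i. L i \<noteq> {} \<and> c i \<in> e) [0..<t])
        = card {i. i < t \<and> L i \<noteq> {} \<and> c i \<in> e}"
      by (simp add: length_filter_conv_card cong: conj_cong)
    finally show ?thesis .
  qed
  have star_pos: "\<tau> {c i, l}" if "i < t" "l \<in> L i" for i l
  proof -
    have "{j. j < t \<and> L j \<noteq> {} \<and> c j \<in> {c i, l}} = {i}"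
    proof (intro set_eqI iffI)
      fix j assume j: "j \<in> {j. j < t \<and> L j \<noteq> {} \<and> c j \<in> {c i, l}}"
      show "j \<in> {i}"
      proof (rule ccontr)
        assume "j \<notin> {i}"
        then show False using j h2 that by auto
      qed
    next
      fix j assume "j \<in> {i}" then show "j \<in> {j. j < t \<and> L j \<noteq> {} \<and> c j \<in> {c i, l}}"
        using that by auto
    qed
    then show ?thesis using tau by simp
  qed
  have port_neg: "\<not> \<tau> {u, v}" if "i < t" "j < t" "u \<in> ports (c i) (L i)" "v \<in> ports (c j) (L j)" for i j u v
  proof -
    have nc: "c k \<noteq> w" if "k < t" "L k \<noteq> {}" "m < t" "w \<in> ports (c m) (L m)" for k m w
    proof
      assume eq: "c k = w"
      show False
      proof (cases "k = m")
        case True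
        then show ?thesis using that eq h1 unfolding ports_def by (auto split: if_splits)
      next
        case False
        then show ?thesis using that eq h2 unfolding ports_def by (fastforce split: if_splits)
      qed
    qed
    have E0: "{k. k < t \<and> L k \<noteq> {} \<and> c k \<in> {u, v}} = {}"
      using nc that by blast
    have "\<tau> {u,v} = odd (card ({}::nat set))" using tau[of "{u, v}"] E0 by (simp only:)
    then show ?thesis by simp
  qed
  define BV where "BV i = insert (c i) (L i)" for i
  define BE where "BE i = {{c i, l} | l. l \<in> L i}" for i
  have "signed_minor (Kt_vertices t) (Kt_edges t) (\<lambda>_. False) V E (\<lambda>_. False)"
    unfolding signed_minor_def
  proof (intro exI conjI ballI allI impI)
    show "switching_equiv V (\<lambda>_. False) \<tau>"
      unfolding \<tau>_def by (rule foldr_switch_equiv) (use h1 in \<open>auto simp: xs_def\<close>)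
  next
    fix x assume "x \<in> Kt_vertices t"
    then have x: "x < t" by (simp add: Kt_vertices_def)
    show "subgraph (BV x) (BE x) V E"
      using h1 x unfolding subgraph_def BV_def BE_def by auto
    have F: "{e \<in> BE x. \<tau> e} = BE x" using star_pos x unfolding BE_def by auto
    let ?R = "\<lambda>a b. {a, b} \<in> BE x"
    have toc: "?R\<^sup>*\<^sup>* u (c x)" if "u \<in> BV x" for u
    proof (cases "u = c x")
      case False
      then have "u \<in> L x" using that BV_def by auto
      then have "?R u (c x)" unfolding BE_def by (auto simp: insert_commute)
      then show ?thesis by auto
    qed simp
    have fromc: "?R\<^sup>*\<^sup>* (c x) u" if "u \<in> BV x" for u
    proof (cases "u = c x")
      case False
      then have "u \<in> L x" using that BV_def by auto
      then have "?R (c x) u" unfolding BE_def by auto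
      then show ?thesis by auto
    qed simp
    show "connected_graph (BV x) {e \<in> BE x. \<tau> e}"
      unfolding connected_graph_def F
      using toc fromc by (auto simp: BV_def intro: rtranclp_trans)
  next
    fix x y assume "x \<in> Kt_vertices t" "y \<in> Kt_vertices t" "x \<noteq> y"
    then show "BV x \<inter> BV y = {}" using h2 by (simp add: Kt_vertices_def BV_def)
  next
    fix x y assume "{x, y} \<in> Kt_edges t"
    then obtain i j where ij: "{x, y} = {i, j}" "i < t" "j < t" "i \<noteq> j"
      unfolding Kt_edges_def by blast
    then have xy: "x < t" "y < t" "x \<noteq> y" by (auto simp: doubleton_eq_iff)
    then obtain u v where uv: "u \<in> ports (c x) (L x)" "v \<in> ports (c y) (L y)" "{u, v} \<in> E"
      using h3 by blast
    have "ports (c z) (L z) \<subseteq> BV z" for z unfolding ports_def BV_def by auto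
    then show "\<exists>u\<in>BV x. \<exists>v\<in>BV y. {u, v} \<in> E \<and> \<tau> {u, v} = False"
      using uv port_neg[OF xy(1,2) uv(1,2)] by blast
  qed
  moreover have "finite {t. signed_minor (Kt_vertices t) (Kt_edges t) (\<lambda>_. False) V E (\<lambda>_. False)}"
  proof (rule finite_subset[of _ "{..card V}"])
    show "{t. signed_minor (Kt_vertices t) (Kt_edges t) (\<lambda>_. False) V E (\<lambda>_. False)} \<subseteq> {..card V}"
    proof
      fix s assume "s \<in> {t. signed_minor (Kt_vertices t) (Kt_edges t) (\<lambda>_. False) V E (\<lambda>_. False)}"
      then have "signed_minor (Kt_vertices s) (Kt_edges s) (\<lambda>_. False) V E (\<lambda>_. False)" by (rule CollectD)
      from bound[OF finV this] show "s \<in> {..card V}" by (rule atMost_iff[THEN iffD2])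
    qed
  qed (rule finite_atMost)
  ultimately show ?thesis unfolding odd_hadwiger_def by (intro Max_ge) (assumption, rule CollectI)
qed

end
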